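(* Let $A\in\mathbb{R}^{N\times N}$ be a symmetric matrix with elements $a_{kl}$ and non-zero diagonal entries, let $\Omega=\{1,\ldots,N\}$ be the nodal set of its graph, where nodes $k,l$ are adjacent iff $a_{kl}\ne0$, and for $\Omega'\subset\Omega$ let $\mathcal{A}(\Omega')$ denote the set of all nodes adjacent to some node of $\Omega'$. Suppose there exists a nonempty $\mathring{\Omega}\subsetneq\Omega$ such that $\mathcal{A}(\mathring{\Omega})\subsetneq\Omega$. Then there exist disjoint nonempty subsets $\mathring{\Omega}_1,\mathring{\Omega}_2$ and a set $\Gamma$ such that $\Omega=\mathring{\Omega}_1\cup\mathring{\Omega}_2\cup\Gamma$ (disjoint union) and $\Gamma=\mathcal{A}(\mathring{\Omega}_1)\setminus\mathring{\Omega}_1=\mathcal{A}(\mathring{\Omega}_2)\setminus\mathring{\Omega}_2$.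
   Context: $A$ is the sparse symmetric fine-grid stiffness matrix; the proposition underlies a divide-and-conquer splitting of $A$ into two subdomains $\Omega_i=\mathring{\Omega}_i\cup\Gamma$ coupled only through $\Gamma$. *)

theory Defs
  imports "HOL-Analysis.Analysis"
begin

text \<open>Nodes are the elements of the finite index type 'n (so Omega = UNIV).
  Nodes k, l are adjacent iff the entry A k l is non-zero.\<close>
definition adjacent :: "real^'n^'n \<Rightarrow> 'n \<Rightarrow> 'n \<Rightarrow> bool" where
  "adjacent A k l \<longleftrightarrow> A $ k $ l \<noteq> 0"

definition adj_set :: "real^'n^'n \<Rightarrow> 'n set \<Rightarrow> 'n set" where
  "adj_set A S = {l. \<exists>k\<in>S. adjacent A k l}"

end

theory Submission
  imports Defs
begin

theorem proposition2:
  fixes A :: "real^'n^'n"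
  assumes symm: "transpose A = A"
    and diag: "\<And>k. A $ k $ k \<noteq> 0"
    and ex: "\<exists>S0. S0 \<noteq> {} \<and> S0 \<subset> (UNIV :: 'n set) \<and> adj_set A S0 \<subset> UNIV"
  shows "\<exists>O1 O2 \<Gamma>. O1 \<noteq> {} \<and> O2 \<noteq> {} \<and>
           O1 \<inter> O2 = {} \<and> O1 \<inter> \<Gamma> = {} \<and> O2 \<inter> \<Gamma> = {} \<and>
           UNIV = O1 \<union> O2 \<union> \<Gamma> \<and>
           \<Gamma> = adj_set A O1 - O1 \<and> \<Gamma> = adj_set A O2 - O2"
proof -
  have sy: "\<And>k l. adjacent A k l \<longleftrightarrow> adjacent A l k"
    proof -
    fix k l
    have "transpose A $ l $ k = A $ k $ l" by (simp add: transpose_def)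
    then show "adjacent A k l \<longleftrightarrow> adjacent A l k" using symm by (simp add: adjacent_def)
  qed
  have rf: "\<And>S. S \<subseteq> adj_set A S"
    using diag by (auto simp: adj_set_def adjacent_def)
  obtain S0 where S0: "S0 \<noteq> {}" "adj_set A S0 \<subset> UNIV" using ex by blast
  define O2 where "O2 = UNIV - adj_set A S0"
  define O1 where "O1 = UNIV - adj_set A O2"
  define G where "G = adj_set A O2 - O2"
  have O2ne: "O2 \<noteq> {}" using S0 O2_def by blast
  have S0O1: "S0 \<subseteq> O1"
    unfolding O1_def O2_def adj_set_def using sy by blast
  have O1ne: "O1 \<noteq> {}" using S0 S0O1 by blast
  have d12: "O1 \<inter> O2 = {}" using rf[of O2] O1_def by blast
  have e1: "adj_set A O1 - O1 = G"
  proof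
    show "adj_set A O1 - O1 \<subseteq> G"
      unfolding G_def O1_def adj_set_def using sy by blast
    show "G \<subseteq> adj_set A O1 - O1"
    proof
      fix l assume l: "l \<in> G"
      then have "l \<in> adj_set A S0" unfolding G_def O2_def by blast
      then obtain k where "k \<in> S0" "adjacent A k l" unfolding adj_set_def by blast
      then show "l \<in> adj_set A O1 - O1" using l S0O1 unfolding G_def O1_def adj_set_def by blast
    qed
  qed
  show ?thesis
    apply (rule exI[of _ O1], rule exI[of _ O2], rule exI[of _ G])
    using O1ne O2ne d12 e1 unfolding G_def O1_def by blast
qed

end
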